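(* Let $\mathcal{X}\subseteq\mathbb{R}^d$ be a closed convex set, let $T\ge 1$, let $(\eta_t)_{t\in[T-1]}$ be positive step sizes, and let $(f_t)_{t\in[T-1]}$ and $(f'_t)_{t\in[T-1]}$ be convex $L$-Lipschitz functions on $\mathcal{X}$. For each $t$ and $x$, let $\nabla f_t(x)$ and $\nabla f'_t(x)$ denote fixed (arbitrary) choices of subgradients of $f_t$ and $f'_t$ at $x$. Let $(x^t)_{t\in[T]}$ and $(y^t)_{t\in[T]}$ be defined by $x^1=y^1\in\mathcal{X}$ and, for all $t\in[T-1]$, $$x^{t+1}=\mathsf{Proj}_{\mathcal{X}}[x^t-\eta_t\nabla f_t(x^t)],\qquad y^{t+1}=\mathsf{Proj}_{\mathcal{X}}[y^t-\eta_t\nabla f'_t(y^t)].$$ Suppose that for every $t\in[T-1]$, $\|\nabla f_t(x^t)-\nabla f'_t(x^t)\|\le a_t$ for scalars $0\le a_t\le 2L$. Let $t_0=\inf\{t: f_t\neq f'_t\}$. Then $$\|x^T-y^T\|\le 2L\sqrt{\sum_{t=t_0}^{T-1}\eta_t^2}+2\sum_{t=t_0+1}^{T-1}\eta_t a_t .$$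
   Context: $\|\cdot\|$ is the Euclidean norm and $\mathsf{Proj}_{\mathcal{X}}$ is Euclidean projection onto $\mathcal{X}$. The functions are assumed $L$-Lipschitz on an open set containing $\mathcal{X}$, so all subgradients have norm at most $L$. Empty sums are $0$. *)

theory Defs
  imports "HOL-Analysis.Analysis"
begin

definition is_subgradient :: "'a::real_inner set \<Rightarrow> ('a \<Rightarrow> real) \<Rightarrow> 'a \<Rightarrow> 'a \<Rightarrow> bool" where
  "is_subgradient U f x g \<longleftrightarrow> (\<forall>y\<in>U. f y \<ge> f x + g \<bullet> (y - x))"

text \<open>First index t in [T-1] where the two function sequences differ; T (i.e. +infinity,
  which makes all sums empty) if they never differ.\<close>
definition first_diff :: "nat \<Rightarrow> (nat \<Rightarrow> 'a \<Rightarrow> real) \<Rightarrow> (nat \<Rightarrow> 'a \<Rightarrow> real) \<Rightarrow> nat" where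
  "first_diff T f f' = (let S = {t\<in>{1..T-1}. f t \<noteq> f' t} in if S = {} then T else Min S)"

end

theory Submission
  imports Defs
begin

lemma subgrad_norm:
  fixes f :: "'a::real_inner \<Rightarrow> real"
  assumes "open U" "z \<in> U" "L-lipschitz_on U f" "is_subgradient U f z g"
  shows "norm g \<le> L"
proof (cases "g = 0")
  case True thus ?thesis using lipschitz_on_nonneg[OF assms(3)] by simp
next
  case False
  obtain e where e: "e > 0" "ball z e \<subseteq> U" using assms(1,2) open_contains_ball by blast
  define w where "w = z + (e/2/norm g) *\<^sub>R g"
  have ng: "norm g > 0" using False by simp
  have dw: "dist w z = e/2" using ng e by (simp add: w_def dist_norm)
  hence "w \<in> U" using e by (auto simp: dist_commute)
  have "f w \<ge> f z + g \<bullet> (w - z)" using assms(4) \<open>w \<in> U\<close> by (auto simp: is_subgradient_def)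
  moreover have "g \<bullet> (w - z) = (e/2) * norm g"
    using ng by (simp add: w_def inner_commute power2_norm_eq_inner[symmetric] power2_eq_square)
  moreover have "dist (f w) (f z) \<le> L * dist w z" using lipschitz_onD[OF assms(3) \<open>w \<in> U\<close> assms(2)] .
  moreover have "f w - f z \<le> \<bar>f w - f z\<bar>" by (rule abs_ge_self)
  moreover have "L * dist w z = L * (e/2)" using dw by simp
  ultimately have "(e/2) * norm g \<le> L * (e/2)" unfolding dist_real_def by linarith
  thus ?thesis using e by (simp add: mult.commute)
qed

lemma step_ineq:
  fixes p q gp gq hp :: "'a::euclidean_space"
  assumes X: "closed X" "convex X" "X \<noteq> {}"
    and eta: "\<eta> > 0" and ngp: "norm gp \<le> L" and ngq: "norm gq \<le> L"
    and mono: "(hp - gq) \<bullet> (p - q) \<ge> 0" and na: "norm (gp - hp) \<le> a"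
  shows "(norm (closest_point X (p - \<eta> *\<^sub>R gp) - closest_point X (q - \<eta> *\<^sub>R gq)))\<^sup>2
     \<le> (norm (p - q))\<^sup>2 + 2 * \<eta> * a * norm (p - q) + 4 * L\<^sup>2 * \<eta>\<^sup>2"
proof -
  let ?u = "p - q" and ?v = "gp - gq"
  have n1: "norm (closest_point X (p - \<eta> *\<^sub>R gp) - closest_point X (q - \<eta> *\<^sub>R gq))
      \<le> norm (?u - \<eta> *\<^sub>R ?v)"
    using closest_point_lipschitz[OF X(2,1,3), of "p - \<eta> *\<^sub>R gp" "q - \<eta> *\<^sub>R gq"]
    by (simp add: dist_norm algebra_simps)
  have e: "(norm (?u - \<eta> *\<^sub>R ?v))\<^sup>2 = (norm ?u)\<^sup>2 - 2 * \<eta> * (?u \<bullet> ?v) + \<eta>\<^sup>2 * (norm ?v)\<^sup>2"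
    unfolding power2_norm_eq_inner by (simp add: inner_diff_left inner_diff_right inner_commute power2_eq_square algebra_simps)
  have "?u \<bullet> ?v = ?u \<bullet> (gp - hp) + (hp - gq) \<bullet> ?u"
    by (simp add: inner_diff_right inner_diff_left inner_commute)
  moreover have "?u \<bullet> (gp - hp) \<ge> - (norm ?u * a)"
  proof -
    have "\<bar>?u \<bullet> (gp - hp)\<bar> \<le> norm ?u * norm (gp - hp)" by (rule Cauchy_Schwarz_ineq2)
    also have "\<dots> \<le> norm ?u * a" using na by (simp add: mult_left_mono)
    finally show ?thesis by linarith
  qed
  ultimately have ip: "?u \<bullet> ?v \<ge> - (norm ?u * a)" using mono by (simp add: inner_commute)
  have nv: "norm ?v \<le> 2 * L" using norm_triangle_ineq4[of gp gq] ngp ngq by linarith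
  have L0: "0 \<le> L" using ngp norm_ge_zero order_trans by blast
  have "(norm ?v)\<^sup>2 \<le> (2*L)\<^sup>2" using nv by (intro power_mono) auto
  hence "\<eta>\<^sup>2 * (norm ?v)\<^sup>2 \<le> 4 * L\<^sup>2 * \<eta>\<^sup>2" by (simp add: power_mult_distrib mult_left_mono mult.commute)
  moreover have "- 2 * \<eta> * (?u \<bullet> ?v) \<le> 2 * \<eta> * a * norm ?u"
  proof -
    have "2*\<eta>*(-(?u \<bullet> ?v)) \<le> 2*\<eta>*(norm ?u * a)" using ip eta by (intro mult_left_mono) auto
    then show ?thesis by (simp add: algebra_simps)
  qed
  ultimately have "(norm (?u - \<eta> *\<^sub>R ?v))\<^sup>2 \<le> (norm ?u)\<^sup>2 + 2 * \<eta> * a * norm ?u + 4 * L\<^sup>2 * \<eta>\<^sup>2"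
    using e by linarith
  moreover have "(norm (closest_point X (p - \<eta> *\<^sub>R gp) - closest_point X (q - \<eta> *\<^sub>R gq)))\<^sup>2
      \<le> (norm (?u - \<eta> *\<^sub>R ?v))\<^sup>2" using n1 by (simp add: power_mono)
  ultimately show ?thesis by linarith
qed


lemma alg:
  fixes A A' C b d D :: real
  assumes "0 \<le> A" "A \<le> A'" "0 \<le> C" "0 \<le> b" "0 \<le> d" "d \<le> A + C" "0 \<le> D"
    and "D\<^sup>2 \<le> d\<^sup>2 + 2*b*d + (A'\<^sup>2 - A\<^sup>2)"
  shows "D \<le> A' + C + 2*b"
proof -
  have "d\<^sup>2 \<le> (A+C)\<^sup>2" using assms by (intro power_mono) auto
  moreover have "b*d \<le> b*(A+C)" using assms by (intro mult_left_mono) auto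
  moreover have "A*C \<le> A'*C" "A*b \<le> A'*b" using assms by (auto intro: mult_right_mono)
  moreover have "0 \<le> C*b" "0 \<le> A*b" using assms by auto
  moreover have bb: "0 \<le> b*b" by simp
  ultimately have "D\<^sup>2 \<le> (A' + C + 2*b)\<^sup>2" using assms(8) by (simp add: power2_eq_square algebra_simps) (insert bb, linarith)
  thus ?thesis using assms power2_le_imp_le by (metis add_nonneg_nonneg mult_nonneg_nonneg order_trans zero_le_numeral)
qed

theorem lemma3p1:
  fixes X U :: "'a::euclidean_space set"
    and T :: nat and L :: real
    and \<eta> a :: "nat \<Rightarrow> real"
    and f f' :: "nat \<Rightarrow> 'a \<Rightarrow> real"
    and grad :: "('a \<Rightarrow> real) \<Rightarrow> 'a \<Rightarrow> 'a"
    and x y :: "nat \<Rightarrow> 'a"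
  assumes X_closed: "closed X" and X_convex: "convex X"
    and U_open: "open U" and XU: "X \<subseteq> U"
    and T_ge: "T \<ge> 1"
    and eta_pos: "\<And>t. t \<in> {1..T-1} \<Longrightarrow> \<eta> t > 0"
    and f_convex: "\<And>t. t \<in> {1..T-1} \<Longrightarrow> convex_on U (f t)"
    and f'_convex: "\<And>t. t \<in> {1..T-1} \<Longrightarrow> convex_on U (f' t)"
    and f_lip: "\<And>t. t \<in> {1..T-1} \<Longrightarrow> L-lipschitz_on U (f t)"
    and f'_lip: "\<And>t. t \<in> {1..T-1} \<Longrightarrow> L-lipschitz_on U (f' t)"
    and grad_f: "\<And>t z. t \<in> {1..T-1} \<Longrightarrow> z \<in> X \<Longrightarrow> is_subgradient U (f t) z (grad (f t) z)"
    and grad_f': "\<And>t z. t \<in> {1..T-1} \<Longrightarrow> z \<in> X \<Longrightarrow> is_subgradient U (f' t) z (grad (f' t) z)"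
    and x1: "x 1 \<in> X" and xy1: "y 1 = x 1"
    and x_step: "\<And>t. t \<in> {1..T-1} \<Longrightarrow>
        x (Suc t) = closest_point X (x t - \<eta> t *\<^sub>R grad (f t) (x t))"
    and y_step: "\<And>t. t \<in> {1..T-1} \<Longrightarrow>
        y (Suc t) = closest_point X (y t - \<eta> t *\<^sub>R grad (f' t) (y t))"
    and a_bound: "\<And>t. t \<in> {1..T-1} \<Longrightarrow> norm (grad (f t) (x t) - grad (f' t) (x t)) \<le> a t"
    and a_range: "\<And>t. t \<in> {1..T-1} \<Longrightarrow> 0 \<le> a t \<and> a t \<le> 2 * L"
  shows "norm (x T - y T) \<le>
      2 * L * sqrt (\<Sum>t = first_diff T f f' .. T-1. (\<eta> t)\<^sup>2)
      + 2 * (\<Sum>t = first_diff T f f' + 1 .. T-1. \<eta> t * a t)"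
proof -
  have Xne: "X \<noteq> {}" using x1 by auto
  have xyin: "x k \<in> X \<and> y k \<in> X" if "1 \<le> k" "k \<le> T" for k
    using that
  proof (induction k)
    case 0 then show ?case by simp
  next
    case (Suc k)
    show ?case
    proof (cases "k = 0")
      case True then show ?thesis using x1 xy1 by simp
    next
      case False
      then have k: "k \<in> {1..T-1}" using Suc.prems by auto
      show ?thesis using x_step[OF k] y_step[OF k]
        closest_point_in_set[OF X_closed Xne] by simp
    qed
  qed
  define t0 where "t0 = first_diff T f f'"
  have t0_props: "1 \<le> t0 \<and> t0 \<le> T \<and> (\<forall>t. 1 \<le> t \<longrightarrow> t < t0 \<longrightarrow> f t = f' t)"
  proof (cases "{t\<in>{1..T-1}. f t \<noteq> f' t} = {}")
    case True
    then show ?thesis using T_ge unfolding t0_def first_diff_def Let_def by auto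
  next
    case False
    let ?S = "{t\<in>{1..T-1}. f t \<noteq> f' t}"
    have fin: "finite ?S" by simp
    have t0S: "t0 = Min ?S" unfolding t0_def first_diff_def Let_def by (simp only: if_not_P[OF False])
    have "t0 \<in> ?S" using Min_in[OF fin False] t0S by simp
    moreover have "\<forall>t. 1 \<le> t \<longrightarrow> t < t0 \<longrightarrow> f t = f' t"
    proof (intro allI impI)
      fix t assume "1 \<le> t" "t < t0"
      moreover have "t0 \<le> T - 1" using \<open>t0 \<in> ?S\<close> by auto
      show "f t = f' t"
      proof (rule ccontr)
        assume "f t \<noteq> f' t"
        then have "t \<in> ?S" using \<open>1 \<le> t\<close> \<open>t < t0\<close> \<open>t0 \<le> T - 1\<close> by auto
        then have "t0 \<le> t" using Min_le[OF fin] t0S by simp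
        then show False using \<open>t < t0\<close> by simp
      qed
    qed
    ultimately show ?thesis by auto
  qed
  have eq: "x k = y k" if "1 \<le> k" "k \<le> t0" for k
    using that
  proof (induction k)
    case 0 then show ?case by simp
  next
    case (Suc k)
    show ?case
    proof (cases "k = 0")
      case True then show ?thesis using xy1 by simp
    next
      case False
      then have k: "k \<in> {1..T-1}" using Suc.prems t0_props by auto
      have "f k = f' k" using t0_props Suc.prems False by auto
      then show ?thesis using x_step[OF k] y_step[OF k] Suc.IH Suc.prems False by simp
    qed
  qed
  define A where "A k = 2 * L * sqrt (\<Sum>t\<in>{t0..<k}. (\<eta> t)\<^sup>2)" for k
  define C where "C k = 2 * (\<Sum>t\<in>{Suc t0..<k}. \<eta> t * a t)" for k
  have main: "norm (x T - y T) \<le> A T + C T"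
    using conjunct1[OF conjunct2[OF t0_props]]
  proof (induction T rule: dec_induct)
    case base
    then show ?case using eq[of t0] t0_props by (simp add: A_def C_def)
  next
    case (step n)
    have n: "n \<in> {1..T-1}" using step t0_props by auto
    have L0: "0 \<le> L" using lipschitz_on_nonneg[OF f_lip[OF n]] .
    have xn: "x n \<in> X" and yn: "y n \<in> X" using xyin[of n] n by auto
    have xU: "x n \<in> U" and yU: "y n \<in> U" using xn yn XU by auto
    have sg1: "is_subgradient U (f n) (x n) (grad (f n) (x n))" using grad_f[OF n xn] .
    have sg2: "is_subgradient U (f' n) (y n) (grad (f' n) (y n))" using grad_f'[OF n yn] .
    have sg3: "is_subgradient U (f' n) (x n) (grad (f' n) (x n))" using grad_f'[OF n xn] .
    have mono: "(grad (f' n) (x n) - grad (f' n) (y n)) \<bullet> (x n - y n) \<ge> 0"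
    proof -
      have "f' n (y n) \<ge> f' n (x n) + grad (f' n) (x n) \<bullet> (y n - x n)"
        using sg3 yU by (auto simp: is_subgradient_def)
      moreover have "f' n (x n) \<ge> f' n (y n) + grad (f' n) (y n) \<bullet> (x n - y n)"
        using sg2 xU by (auto simp: is_subgradient_def)
      moreover have "grad (f' n) (x n) \<bullet> (y n - x n) = - (grad (f' n) (x n) \<bullet> (x n - y n))"
        by (simp add: inner_diff_right)
      ultimately show ?thesis by (simp add: inner_diff_left)
    qed
    have ineq: "(norm (x (Suc n) - y (Suc n)))\<^sup>2 \<le> (norm (x n - y n))\<^sup>2
        + 2 * \<eta> n * a n * norm (x n - y n) + 4 * L\<^sup>2 * (\<eta> n)\<^sup>2"
      unfolding x_step[OF n] y_step[OF n]
      by (rule step_ineq[OF X_closed X_convex Xne eta_pos[OF n]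
            subgrad_norm[OF U_open xU f_lip[OF n] sg1] subgrad_norm[OF U_open yU f'_lip[OF n] sg2]
            mono a_bound[OF n]])
    define S where "S = (\<Sum>t\<in>{t0..<n}. (\<eta> t)\<^sup>2)"
    have S0: "0 \<le> S" unfolding S_def by (simp add: sum_nonneg)
    have An: "A n = 2 * L * sqrt S" by (simp add: A_def S_def)
    have ASn: "A (Suc n) = 2 * L * sqrt (S + (\<eta> n)\<^sup>2)"
      using step.hyps by (simp add: A_def S_def)
    have A0: "0 \<le> A n" using An L0 S0 by simp
    have AA: "A n \<le> A (Suc n)" using An ASn L0 by (simp add: mult_left_mono)
    have A2: "(A (Suc n))\<^sup>2 - (A n)\<^sup>2 = 4 * L\<^sup>2 * (\<eta> n)\<^sup>2"
      using An ASn S0 by (simp add: power_mult_distrib algebra_simps)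
    have C0: "0 \<le> C n" unfolding C_def
    proof -
      have "0 \<le> \<eta> t * a t" if "t \<in> {Suc t0..<n}" for t
      proof -
        have t: "t \<in> {1..T-1}" using that step.hyps t0_props by auto
        show ?thesis using eta_pos[OF t] a_range[OF t] by simp
      qed
      then have "0 \<le> (\<Sum>t\<in>{Suc t0..<n}. \<eta> t * a t)" by (rule sum_nonneg)
      then show "0 \<le> 2 * (\<Sum>t\<in>{Suc t0..<n}. \<eta> t * a t)" by simp
    qed
    show ?case
    proof (cases "n = t0")
      case True
      have "norm (x n - y n) = 0" using eq[of n] True t0_props by simp
      then have "(norm (x (Suc n) - y (Suc n)))\<^sup>2 \<le> (A (Suc n))\<^sup>2" using ineq A2 An True
        by (simp add: A_def)
      then have "norm (x (Suc n) - y (Suc n)) \<le> A (Suc n)"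
        using power2_le_imp_le A0 AA by fastforce
      then show ?thesis using True by (simp add: C_def)
    next
      case False
      have CS: "C (Suc n) = C n + 2 * (\<eta> n * a n)"
        using False step.hyps by (simp add: C_def algebra_simps)
      have b0: "0 \<le> \<eta> n * a n" using eta_pos[OF n] a_range[OF n] by simp
      have "norm (x (Suc n) - y (Suc n)) \<le> A (Suc n) + C n + 2 * (\<eta> n * a n)"
        by (rule alg[OF A0 AA C0 b0 norm_ge_zero step.IH norm_ge_zero]) (use ineq A2 in simp)
      then show ?thesis using CS by simp
    qed
  qed
  have e1: "{t0..T-1} = {t0..<T}" using T_ge by auto
  have e2: "{t0+1..T-1} = {Suc t0..<T}" using T_ge by auto
  show ?thesis using main unfolding A_def C_def t0_def[symmetric] e1 e2 .
qed

end
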